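(* Let $(\pi_r)_{r\in\mathbb{N}}$ be periods with $\pi_r\ge2$ for all $r$, and let $(K_t)_{t\in\mathbb{N}}$ be the multiperiodic process with periods $(\pi_r)$. For $T\in\mathbb{N}$ define the random set of types $\mathcal{N}_T:=\{K_1,\dots,K_T\}\cap\mathbb{N}$, and the deterministic sets $$\mathcal{A}_T:=\{r\in\mathbb{N}:\bar w_r\le T\},\qquad \mathcal{B}_T:=\{r\in\mathbb{N}:P(K_1=r)\ge 1/T\},$$ where $\bar w_r:=v_1$ with $v_r:=\pi_r$ and $v_i:=v_{i+1}\pi_i/(\pi_i-1)+1$ for $i=r-1,\dots,1$. Then $$\operatorname{card}\mathcal{A}_T\le \mathbb{E}\operatorname{card}\mathcal{N}_T\le \operatorname{card}\mathcal{B}_T+T\,P(K_1\notin\mathcal{B}_T).$$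
   Context: $\mathbb{N}=\{1,2,3,\dots\}$. Multiperiodic sequence with periods $\pi_r\in\mathbb{N}$ and seeds $\sigma_r\in\{1,\dots,\pi_r\}$: the sequence $(k_t)_{t\in\mathbb{N}}$ with values in $\mathbb{N}\cup\{\infty\}$ such that for each $r$, the subsequence obtained from $(k_t)$ by deleting all tokens $k_t<r$, denoted $(k^{(r)}_t)_{t\in\mathbb{N}}$, satisfies $k^{(r)}_t=r\iff t\equiv\sigma_r\pmod{\pi_r}$; entries left undefined for all $r$ are set to $\infty$. Equivalently: clocks $\phi_r$ start at $\sigma_r$; for each token, scan $r=1,2,\dots$, decrementing each clock with $\phi_r>1$, until the first $r$ with $\phi_r=1$, output that $r$ and reset $\phi_r=\pi_r$. The multiperiodic process with periods $(\pi_r)$ is the random multiperiodic sequence with these periods and independent random seeds $\Sigma_r$ uniformly distributed on $\{1,\dots,\pi_r\}$; it is stationary, so $P(K_t=r)$ does not depend on $t$. *)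

theory Defs
  imports "HOL-Probability.Probability" "HOL-Library.Extended_Nat"
begin

text \<open>Periods and seeds are functions on nat; only indices r \<ge> 1 are meaningful
  (the paper's index set is {1,2,3,...}). Tokens take values in enat (\<infinity> allowed).\<close>

definition first_one :: "(nat \<Rightarrow> nat) \<Rightarrow> enat" where
  "first_one \<phi> = (if \<exists>r\<ge>1. \<phi> r = 1 then enat (LEAST r. r \<ge> 1 \<and> \<phi> r = 1) else \<infinity>)"

definition clock_step :: "(nat \<Rightarrow> nat) \<Rightarrow> (nat \<Rightarrow> nat) \<Rightarrow> (nat \<Rightarrow> nat)" where
  "clock_step \<pi> \<phi> = (\<lambda>r. if r \<ge> 1 \<and> enat r < first_one \<phi> then (if \<phi> r > 1 then \<phi> r - 1 else \<phi> r)
                         else if enat r = first_one \<phi> then \<pi> r else \<phi> r)"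

primrec clocks :: "(nat \<Rightarrow> nat) \<Rightarrow> (nat \<Rightarrow> nat) \<Rightarrow> nat \<Rightarrow> (nat \<Rightarrow> nat)" where
  "clocks \<pi> \<sigma> 0 = \<sigma>"
| "clocks \<pi> \<sigma> (Suc n) = clock_step \<pi> (clocks \<pi> \<sigma> n)"

text \<open>The multiperiodic sequence k_t, for t \<ge> 1.\<close>
definition mp_seq :: "(nat \<Rightarrow> nat) \<Rightarrow> (nat \<Rightarrow> nat) \<Rightarrow> nat \<Rightarrow> enat" where
  "mp_seq \<pi> \<sigma> t = first_one (clocks \<pi> \<sigma> (t - 1))"

text \<open>Law of the independent uniform seeds \<Sigma>_r on {1..\<pi>_r} (r \<ge> 1);
  the dummy coordinate 0 is set to the constant 1.\<close>
definition seed_measure :: "(nat \<Rightarrow> nat) \<Rightarrow> (nat \<Rightarrow> nat) measure" where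
  "seed_measure \<pi> = (\<Pi>\<^sub>M r\<in>UNIV. measure_pmf (if r = 0 then return_pmf 1 else pmf_of_set {1..\<pi> r}))"

text \<open>v_i for the auxiliary recursion: wv \<pi> r k = v_{r-k}, with v_r = \<pi>_r and
  v_i = v_{i+1} \<pi>_i/(\<pi>_i - 1) + 1.\<close>
primrec wv :: "(nat \<Rightarrow> nat) \<Rightarrow> nat \<Rightarrow> nat \<Rightarrow> real" where
  "wv \<pi> r 0 = real (\<pi> r)"
| "wv \<pi> r (Suc k) = wv \<pi> r k * real (\<pi> (r - Suc k)) / (real (\<pi> (r - Suc k)) - 1) + 1"

definition wbar :: "(nat \<Rightarrow> nat) \<Rightarrow> nat \<Rightarrow> real" where
  "wbar \<pi> r = wv \<pi> r (r - 1)"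

end

theory Submission imports Defs begin


lemma fo_less: "enat i < first_one \<phi> \<longleftrightarrow> (\<forall>j. 1 \<le> j \<and> j \<le> i \<longrightarrow> \<phi> j \<noteq> 1)"
proof (cases "\<exists>r\<ge>1. \<phi> r = 1")
  case True
  define l where "l = (LEAST r. r \<ge> 1 \<and> \<phi> r = 1)"
  have l: "l \<ge> 1" "\<phi> l = 1" using LeastI_ex[of "\<lambda>r. r \<ge> 1 \<and> \<phi> r = 1"] True unfolding l_def by auto
  have lm: "\<And>j. j \<ge> 1 \<Longrightarrow> \<phi> j = 1 \<Longrightarrow> l \<le> j" unfolding l_def by (rule Least_le) auto
  have fo: "first_one \<phi> = enat l" using True unfolding first_one_def l_def by simp
  show ?thesis unfolding fo
  proof
    assume "enat i < enat l"
    then have "i < l" by simp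
    then show "\<forall>j. 1 \<le> j \<and> j \<le> i \<longrightarrow> \<phi> j \<noteq> 1" using lm by (meson le_trans not_le)
  next
    assume "\<forall>j. 1 \<le> j \<and> j \<le> i \<longrightarrow> \<phi> j \<noteq> 1"
    then have "i < l" using l by (meson not_le)
    then show "enat i < enat l" by simp
  qed
next
  case False
  then show ?thesis unfolding first_one_def by auto
qed

lemma fo_enat: "first_one \<phi> = enat r \<longleftrightarrow> r \<ge> 1 \<and> \<phi> r = 1 \<and> (\<forall>j. 1 \<le> j \<and> j < r \<longrightarrow> \<phi> j \<noteq> 1)"
proof (cases "\<exists>r\<ge>1. \<phi> r = 1")
  case True
  define l where "l = (LEAST r. r \<ge> 1 \<and> \<phi> r = 1)"
  have l: "l \<ge> 1" "\<phi> l = 1" using LeastI_ex[of "\<lambda>r. r \<ge> 1 \<and> \<phi> r = 1"] True unfolding l_def by auto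
  have lm: "\<And>j. j \<ge> 1 \<Longrightarrow> \<phi> j = 1 \<Longrightarrow> l \<le> j" unfolding l_def by (rule Least_le) auto
  have fo: "first_one \<phi> = enat l" using True unfolding first_one_def l_def by simp
  show ?thesis unfolding fo using l lm
    by (metis enat.inject le_antisym linorder_not_le)
next
  case False
  then show ?thesis unfolding first_one_def by auto
qed

lemma fo_ge1: "enat 1 \<le> first_one \<phi>"
  using fo_less[of 0 \<phi>] ileI1[of 0 "first_one \<phi>"] by (simp add: one_enat_def zero_enat_def eSuc_enat)

lemma cs_lt: "1 \<le> i \<Longrightarrow> enat i < first_one \<phi> \<Longrightarrow> clock_step \<pi> \<phi> i = (if \<phi> i > 1 then \<phi> i - 1 else \<phi> i)"
  unfolding clock_step_def by simp

lemma cs_eq: "first_one \<phi> = enat i \<Longrightarrow> clock_step \<pi> \<phi> i = \<pi> i"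
  unfolding clock_step_def by auto

lemma cs_gt: "first_one \<phi> < enat i \<Longrightarrow> clock_step \<pi> \<phi> i = \<phi> i"
  unfolding clock_step_def by auto

lemma cs_0: "clock_step \<pi> \<phi> 0 = \<phi> 0"
proof -
  have "first_one \<phi> \<noteq> enat 0" using fo_ge1[of \<phi>] by (auto simp: one_enat_def)
  then show ?thesis unfolding clock_step_def by auto
qed

primrec cnt :: "(nat \<Rightarrow> nat) \<Rightarrow> (nat \<Rightarrow> nat) \<Rightarrow> nat \<Rightarrow> nat \<Rightarrow> nat" where
  "cnt \<pi> \<sigma> i 0 = 0"
| "cnt \<pi> \<sigma> i (Suc n) = cnt \<pi> \<sigma> i n + (if enat i \<le> first_one (clocks \<pi> \<sigma> n) then 1 else 0)"

definition Rg :: "(nat \<Rightarrow> nat) \<Rightarrow> (nat \<Rightarrow> nat) \<Rightarrow> bool" where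
  "Rg \<pi> \<sigma> \<longleftrightarrow> (\<forall>i\<ge>1. \<sigma> i \<in> {1..\<pi> i})"

lemma token_cases:
  fixes k :: enat
  obtains "k < enat i" | "k = enat i" | "enat i < k" by (metis linorder_neqE)

lemma rng:
  assumes "Rg \<pi> \<sigma>" "\<And>i. i \<ge> 1 \<Longrightarrow> \<pi> i \<ge> 1" "i \<ge> 1"
  shows "clocks \<pi> \<sigma> n i \<in> {1..\<pi> i}"
proof (induction n)
  case 0 then show ?case using assms unfolding Rg_def by simp
next
  case (Suc n)
  show ?case
  proof (cases "first_one (clocks \<pi> \<sigma> n)" i rule: token_cases)
    case 1 then show ?thesis using Suc by (simp add: cs_gt)
  next
    case 2 then show ?thesis using assms by (simp add: cs_eq)
  next
    case 3 then show ?thesis using Suc assms by (simp add: cs_lt, intro impI conjI; linarith)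
  qed
qed

lemma inv:
  assumes "Rg \<pi> \<sigma>" "\<And>i. i \<ge> 1 \<Longrightarrow> \<pi> i \<ge> 1" "i \<ge> 1"
  shows "int (clocks \<pi> \<sigma> n i) + int (cnt \<pi> \<sigma> (Suc i) n)
    = int (\<sigma> i) + (int (cnt \<pi> \<sigma> i n) - int (cnt \<pi> \<sigma> (Suc i) n)) * (int (\<pi> i) - 1)"
proof (induction n)
  case 0 then show ?case by simp
next
  case (Suc n)
  have r: "clocks \<pi> \<sigma> n i \<in> {1..\<pi> i}" using rng assms by blast
  show ?case
  proof (cases "first_one (clocks \<pi> \<sigma> n)" i rule: token_cases)
    case 1
    then have "\<not> enat i \<le> first_one (clocks \<pi> \<sigma> n)" "\<not> enat (Suc i) \<le> first_one (clocks \<pi> \<sigma> n)"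
    proof -
      have "enat i < enat (Suc i)" by simp
      then show "\<not> enat i \<le> first_one (clocks \<pi> \<sigma> n)" "\<not> enat (Suc i) \<le> first_one (clocks \<pi> \<sigma> n)"
        using 1 by (meson order.strict_trans not_le)+
    qed
    then show ?thesis using Suc 1 by (simp add: cs_gt)
  next
    case 2
    then have c1: "clocks \<pi> \<sigma> n i = 1" using fo_enat by blast
    have "enat i \<le> first_one (clocks \<pi> \<sigma> n)" "\<not> enat (Suc i) \<le> first_one (clocks \<pi> \<sigma> n)"
      using 2 by (auto simp: Suc_ile_eq)
    then show ?thesis using Suc 2 c1 by (simp add: cs_eq algebra_simps)
  next
    case 3
    have "clocks \<pi> \<sigma> n i \<noteq> 1" using 3 fo_less assms(3) by blast
    then have g: "clocks \<pi> \<sigma> n i > 1" using r by auto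
    have "enat i \<le> first_one (clocks \<pi> \<sigma> n)" "enat (Suc i) \<le> first_one (clocks \<pi> \<sigma> n)"
      using 3 by (auto simp: Suc_ile_eq)
    then show ?thesis using Suc 3 g assms(3) by (simp add: cs_lt of_nat_diff algebra_simps)
  qed
qed

lemma cnt_mono: "cnt \<pi> \<sigma> (Suc i) n \<le> cnt \<pi> \<sigma> i n"
proof (induction n)
  case (Suc n) then show ?case
    by (auto simp: Suc_ile_eq order_less_imp_le)
qed simp

lemma cnt1: "cnt \<pi> \<sigma> 1 n = n"
  using fo_ge1 by (induction n) (auto simp: one_enat_def)

lemma tok_exists: "cnt \<pi> \<sigma> (Suc i) n < cnt \<pi> \<sigma> i n \<Longrightarrow> \<exists>m<n. first_one (clocks \<pi> \<sigma> m) = enat i"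
proof (induction n)
  case 0 then show ?case by simp
next
  case (Suc n)
  show ?case
  proof (cases "cnt \<pi> \<sigma> (Suc i) n < cnt \<pi> \<sigma> i n")
    case True then show ?thesis using Suc by (meson less_SucI)
  next
    case False
    then have "enat i \<le> first_one (clocks \<pi> \<sigma> n) \<and> \<not> enat (Suc i) \<le> first_one (clocks \<pi> \<sigma> n)"
      using Suc.prems cnt_mono[of \<pi> \<sigma> i n] by (auto split: if_splits)
    then have "first_one (clocks \<pi> \<sigma> n) = enat i" by (auto simp: Suc_ile_eq)
    then show ?thesis by blast
  qed
qed

lemma ratio:
  assumes "Rg \<pi> \<sigma>" "\<And>i. i \<ge> 1 \<Longrightarrow> \<pi> i \<ge> 2" "i \<ge> 1"
  shows "real (cnt \<pi> \<sigma> i n) \<le> real (cnt \<pi> \<sigma> (Suc i) n) * real (\<pi> i) / (real (\<pi> i) - 1) + 1"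
proof -
  have p1: "\<And>i. i \<ge> 1 \<Longrightarrow> \<pi> i \<ge> 1" using assms(2) by (metis le_trans one_le_numeral)
  note iv = inv[OF assms(1) p1 assms(3), of n]
  have c: "clocks \<pi> \<sigma> n i \<le> \<pi> i" using rng[OF assms(1) p1 assms(3)] by auto
  have s: "\<sigma> i \<ge> 1" using assms(1,3) unfolding Rg_def by auto
  have p: "\<pi> i \<ge> 2" using assms by auto
  have "int (cnt \<pi> \<sigma> (Suc i) n) \<ge> (int (cnt \<pi> \<sigma> i n) - int (cnt \<pi> \<sigma> (Suc i) n) - 1) * (int (\<pi> i) - 1)"
    using iv c s by (simp add: algebra_simps)
  then have h: "real (cnt \<pi> \<sigma> (Suc i) n) \<ge> (real (cnt \<pi> \<sigma> i n) - real (cnt \<pi> \<sigma> (Suc i) n) - 1) * (real (\<pi> i) - 1)"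
  proof -
    assume a: "(int (cnt \<pi> \<sigma> i n) - int (cnt \<pi> \<sigma> (Suc i) n) - 1) * (int (\<pi> i) - 1) \<le> int (cnt \<pi> \<sigma> (Suc i) n)"
    have "real_of_int ((int (cnt \<pi> \<sigma> i n) - int (cnt \<pi> \<sigma> (Suc i) n) - 1) * (int (\<pi> i) - 1)) \<le> real_of_int (int (cnt \<pi> \<sigma> (Suc i) n))"
      using a by (simp only: of_int_le_iff)
    then show ?thesis by simp
  qed
  have pr: "real (\<pi> i) - 1 > 0" using p by simp
  show ?thesis using h pr by (simp add: field_simps)
qed

lemma chain:
  assumes "Rg \<pi> \<sigma>" "\<And>i. i \<ge> 1 \<Longrightarrow> \<pi> i \<ge> 2" "r \<ge> 1" "wbar \<pi> r \<le> real T"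
  shows "d \<le> r - 1 \<Longrightarrow> wv \<pi> r (r - 1 - d) \<le> real (cnt \<pi> \<sigma> (1 + d) T)"
proof (induction d)
  case 0 then show ?case using assms(4) cnt1[of \<pi> \<sigma> T] by (simp add: wbar_def)
next
  case (Suc d)
  define k where "k = r - 1 - Suc d"
  have e1: "r - 1 - d = Suc k" using Suc.prems unfolding k_def by simp
  have e2: "r - Suc k = 1 + d" using Suc.prems unfolding k_def by simp
  have IH: "wv \<pi> r (Suc k) \<le> real (cnt \<pi> \<sigma> (1 + d) T)" using Suc e1 by simp
  define p where "p = real (\<pi> (1 + d))"
  have p: "p - 1 > 0" using assms(2)[of "1+d"] unfolding p_def by simp
  have w: "wv \<pi> r (Suc k) = wv \<pi> r k * p / (p - 1) + 1" using e2 unfolding p_def by simp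
  have ra: "real (cnt \<pi> \<sigma> (1 + d) T) \<le> real (cnt \<pi> \<sigma> (Suc (1 + d)) T) * p / (p - 1) + 1"
    using ratio[OF assms(1,2), of "1 + d"] unfolding p_def by simp
  have "wv \<pi> r k * p / (p - 1) \<le> real (cnt \<pi> \<sigma> (Suc (1 + d)) T) * p / (p - 1)"
    using IH w ra by linarith
  then have "wv \<pi> r k * (p / (p - 1)) \<le> real (cnt \<pi> \<sigma> (Suc (1 + d)) T) * (p / (p - 1))"
    by (simp only: times_divide_eq_right)
  moreover have "p / (p - 1) > 0" using p by simp
  ultimately have "wv \<pi> r k \<le> real (cnt \<pi> \<sigma> (Suc (1 + d)) T)" using mult_le_cancel_right_pos by blast
  then show ?case unfolding k_def by simp
qed

lemma det:
  assumes "Rg \<pi> \<sigma>" "\<And>i. i \<ge> 1 \<Longrightarrow> \<pi> i \<ge> 2" "r \<ge> 1" "wbar \<pi> r \<le> real T"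
  shows "\<exists>t\<in>{1..T}. mp_seq \<pi> \<sigma> t = enat r"
proof -
  have p1: "\<And>i. i \<ge> 1 \<Longrightarrow> \<pi> i \<ge> 1" using assms(2) by (metis le_trans one_le_numeral)
  have "wv \<pi> r (r - 1 - (r - 1)) \<le> real (cnt \<pi> \<sigma> (1 + (r - 1)) T)" using chain[OF assms, of "r - 1"] by simp
  then have cr: "\<pi> r \<le> cnt \<pi> \<sigma> r T" using assms(3) by simp
  have "cnt \<pi> \<sigma> (Suc r) T < cnt \<pi> \<sigma> r T"
  proof (rule ccontr)
    assume "\<not> ?thesis"
    then have eq: "cnt \<pi> \<sigma> (Suc r) T = cnt \<pi> \<sigma> r T" using cnt_mono[of \<pi> \<sigma> r T] by simp
    note iv = inv[OF assms(1) p1 assms(3), of T]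
    have "clocks \<pi> \<sigma> T r \<ge> 1" using rng[OF assms(1) p1 assms(3)] by auto
    moreover have "\<sigma> r \<le> \<pi> r" using assms(1,3) unfolding Rg_def by auto
    ultimately show False using iv eq cr by simp
  qed
  then obtain m where "m < T" "first_one (clocks \<pi> \<sigma> m) = enat r" using tok_exists by blast
  then show ?thesis unfolding mp_seq_def by (intro bexI[of _ "Suc m"]) auto
qed



definition Mx :: "(nat \<Rightarrow> nat) \<Rightarrow> nat \<Rightarrow> nat measure" where
  "Mx \<pi> r = measure_pmf (if r = 0 then return_pmf 1 else pmf_of_set {1..\<pi> r})"

definition S :: "(nat \<Rightarrow> nat) \<Rightarrow> nat \<Rightarrow> nat set" where
  "S \<pi> i = (if i = 0 then {1} else {1..\<pi> i})"

lemma seed_eq: "seed_measure \<pi> = PiM UNIV (Mx \<pi>)"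
  unfolding seed_measure_def Mx_def ..

lemma Mx_eq: "Mx \<pi> i = measure_pmf (pmf_of_set (S \<pi> i))"
  by (simp add: Mx_def S_def pmf_of_set_singleton)

lemma pps: "product_prob_space (Mx \<pi>)"
  unfolding product_prob_space_def product_prob_space_axioms_def product_sigma_finite_def Mx_def
  by (simp add: prob_space_measure_pmf prob_space_imp_sigma_finite)

lemma psf: "product_sigma_finite (Mx \<pi>)"
  using pps unfolding product_prob_space_def by blast

lemma sp: "space (seed_measure \<pi>) = UNIV"
  by (simp add: seed_measure_def space_PiM)

lemma sets_Mx[simp]: "sets (Mx \<pi> i) = UNIV" "space (Mx \<pi> i) = UNIV"
  by (simp_all add: Mx_def)

lemma S_fin: "finite (S \<pi> i)" by (simp add: S_def)

lemma S_ne: "(\<And>i. i \<ge> 1 \<Longrightarrow> \<pi> i \<ge> 1) \<Longrightarrow> S \<pi> i \<noteq> {}"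
  by (simp add: S_def)

lemma emeas_Mx: "(\<And>i. i \<ge> 1 \<Longrightarrow> \<pi> i \<ge> 1) \<Longrightarrow> emeasure (Mx \<pi> i) A = card (S \<pi> i \<inter> A) / card (S \<pi> i)"
  unfolding Mx_eq by (rule emeasure_pmf_of_set[OF S_ne S_fin])

lemma emeas_Mx_single: "(\<And>i. i \<ge> 1 \<Longrightarrow> \<pi> i \<ge> 1) \<Longrightarrow> a \<in> S \<pi> i \<Longrightarrow> emeasure (Mx \<pi> i) {a} = ennreal (1 / real (card (S \<pi> i)))"
  unfolding Mx_eq by (simp add: emeasure_pmf_single S_ne S_fin)

lemma emb_eq: "{\<sigma>. Q (restrict \<sigma> J)} = prod_emb UNIV (Mx \<pi>) J {x \<in> PiE J (\<lambda>_. UNIV). Q x}"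
  by (auto simp: prod_emb_def)

lemma Xsets:
  assumes "finite J"
  shows "{x \<in> PiE J (\<lambda>_. UNIV). Q x} \<in> sets (PiM J (Mx \<pi>))"
proof -
  define X where "X = {x \<in> PiE J (\<lambda>_. UNIV::nat set). Q x}"
  have eq: "X = (\<Union>x\<in>X. PiE J (\<lambda>i. {x i}))"
  proof -
    have "PiE J (\<lambda>i. {x i}) = {x}" if "x \<in> X" for x
      using that unfolding X_def by (intro PiE_singleton) (auto simp: PiE_def)
    then show ?thesis by auto
  qed
  have c: "countable X"
    unfolding X_def by (rule countable_subset[OF _ countable_PiE[OF assms, of "\<lambda>_. UNIV"]]) auto
  have "(\<Union>x\<in>X. PiE J (\<lambda>i. {x i})) \<in> sets (PiM J (Mx \<pi>))"
  proof (rule sets.countable_UN'[OF c])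
    show "(\<lambda>x. PiE J (\<lambda>i. {x i})) ` X \<subseteq> sets (PiM J (Mx \<pi>))"
      using assms by (auto intro!: sets_PiM_I_finite)
  qed
  then show ?thesis using eq unfolding X_def by simp
qed

lemma sets_fin: "finite J \<Longrightarrow> {\<sigma>. Q (restrict \<sigma> J)} \<in> sets (seed_measure \<pi>)"
  unfolding seed_eq emb_eq[of Q J \<pi>] by (intro measurable_prod_emb Xsets) auto

lemma prob_fin:
  assumes J: "finite J" and p1: "\<And>i. i \<ge> 1 \<Longrightarrow> \<pi> i \<ge> 1"
  shows "measure (seed_measure \<pi>) {\<sigma>. Q (restrict \<sigma> J)} = card {x \<in> PiE J (S \<pi>). Q x} / card (PiE J (S \<pi>))"
proof -
  define X where "X = {x \<in> PiE J (\<lambda>_. UNIV::nat set). Q x}"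
  define Bx where "Bx = PiE J (S \<pi>)"
  let ?P = "PiM J (Mx \<pi>)"
  have XS: "X \<in> sets ?P" unfolding X_def by (rule Xsets[OF J])
  have "emeasure (seed_measure \<pi>) {\<sigma>. Q (restrict \<sigma> J)} = emeasure ?P X"
    unfolding seed_eq emb_eq[of Q J \<pi>] X_def
    by (rule product_prob_space.emeasure_PiM_emb'[OF pps]) (use J Xsets in auto)
  then have m1: "measure (seed_measure \<pi>) {\<sigma>. Q (restrict \<sigma> J)} = measure ?P X"
    by (simp add: measure_def)
  define Z where "Z i = PiE J (\<lambda>j. if j = i then - S \<pi> i else UNIV)" for i
  have Zn: "Z i \<in> null_sets ?P" if "i \<in> J" for i
  proof -
    have "Z i \<in> sets ?P" unfolding Z_def by (intro sets_PiM_I_finite J) auto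
    moreover have "emeasure ?P (Z i) = 0"
      unfolding Z_def
      apply (subst product_sigma_finite.emeasure_PiM[OF psf J])
       apply simp
      apply (rule prod_zero[OF J])
      using that by (intro bexI[of _ i]) (auto simp: emeas_Mx[OF p1])
    ultimately show ?thesis by auto
  qed
  define N where "N = (\<Union>i\<in>J. Z i)"
  have Nn: "N \<in> null_sets ?P" unfolding N_def using Zn J by (intro null_sets.finite_UN) auto
  have XN: "X - N = X \<inter> Bx"
    unfolding X_def N_def Z_def Bx_def by (auto simp: PiE_def Pi_def)
  have m2: "measure ?P X = measure ?P (X \<inter> Bx)"
    using measure_Diff_null_set[OF XS Nn] XN by simp
  have fin: "finite (X \<inter> Bx)" unfolding Bx_def using J by (simp add: finite_PiE S_fin)
  have single: "{x} = PiE J (\<lambda>i. {x i})" if "x \<in> Bx" for x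
    using that unfolding Bx_def by (intro PiE_singleton[symmetric]) (auto simp: PiE_def)
  have ems: "emeasure ?P {x} = ennreal (1 / real (card Bx))" if "x \<in> Bx" for x
  proof -
    have "emeasure ?P {x} = (\<Prod>i\<in>J. emeasure (Mx \<pi> i) {x i})"
      unfolding single[OF that] by (rule product_sigma_finite.emeasure_PiM[OF psf J]) simp
    also have "\<dots> = (\<Prod>i\<in>J. ennreal (1 / real (card (S \<pi> i))))"
      using that unfolding Bx_def by (intro prod.cong refl emeas_Mx_single[OF p1]) auto
    also have "\<dots> = ennreal (\<Prod>i\<in>J. 1 / real (card (S \<pi> i)))"
      by (rule prod_ennreal) simp
    also have "(\<Prod>i\<in>J. 1 / real (card (S \<pi> i))) = 1 / real (card Bx)"
      unfolding Bx_def using J by (simp add: card_PiE prod_dividef)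
    finally show ?thesis .
  qed
  have "measure ?P (X \<inter> Bx) = (\<Sum>x\<in>X \<inter> Bx. measure ?P {x})"
    using fin single ems by (intro measure_eq_sum_singleton) (auto intro!: sets_PiM_I_finite J)
  also have "\<dots> = (\<Sum>x\<in>X \<inter> Bx. 1 / real (card Bx))"
    using ems by (intro sum.cong refl) (simp add: measure_def)
  also have "\<dots> = card (X \<inter> Bx) / card Bx" by simp
  finally have m3: "measure ?P (X \<inter> Bx) = card (X \<inter> Bx) / card Bx" .
  have "X \<inter> Bx = {x \<in> Bx. Q x}" unfolding X_def Bx_def by (auto simp: PiE_def)
  then show ?thesis using m1 m2 m3 unfolding Bx_def by simp
qed



lemma fo_local: "\<forall>i\<le>R. \<phi> i = \<psi> i \<Longrightarrow> r \<le> R \<Longrightarrow> first_one \<phi> = enat r \<longleftrightarrow> first_one \<psi> = enat r"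
  unfolding fo_enat by auto

lemma less_local: "\<forall>i\<le>R. \<phi> i = \<psi> i \<Longrightarrow> i \<le> R \<Longrightarrow> enat i < first_one \<phi> \<longleftrightarrow> enat i < first_one \<psi>"
  unfolding fo_less by auto

lemma step_local: "\<forall>i\<le>R. \<phi> i = \<psi> i \<Longrightarrow> i \<le> R \<Longrightarrow> clock_step \<pi> \<phi> i = clock_step \<pi> \<psi> i"
  unfolding clock_step_def using fo_local[of R \<phi> \<psi> i] less_local[of R \<phi> \<psi> i]
  by (auto simp: eq_commute[of "enat i"])

definition stepJ :: "(nat \<Rightarrow> nat) \<Rightarrow> nat \<Rightarrow> (nat \<Rightarrow> nat) \<Rightarrow> (nat \<Rightarrow> nat)" where
  "stepJ \<pi> R x = restrict (clock_step \<pi> x) {0..R}"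

lemma restrict_step: "restrict (clock_step \<pi> \<phi>) {0..R} = stepJ \<pi> R (restrict \<phi> {0..R})"
  unfolding stepJ_def by (intro restrict_ext step_local[of R]) auto

lemma restrict_clocks: "restrict (clocks \<pi> \<sigma> n) {0..R} = (stepJ \<pi> R ^^ n) (restrict \<sigma> {0..R})"
proof (induction n)
  case 0 then show ?case by simp
next
  case (Suc n)
  have "restrict (clocks \<pi> \<sigma> (Suc n)) {0..R} = restrict (clock_step \<pi> (clocks \<pi> \<sigma> n)) {0..R}" by simp
  also have "\<dots> = stepJ \<pi> R (restrict (clocks \<pi> \<sigma> n) {0..R})" by (rule restrict_step)
  also have "\<dots> = (stepJ \<pi> R ^^ Suc n) (restrict \<sigma> {0..R})" by (simp only: Suc.IH funpow.simps comp_apply)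
  finally show ?case .
qed

lemma fo_restrict: "r \<le> R \<Longrightarrow> first_one \<phi> = enat r \<longleftrightarrow> first_one (restrict \<phi> {0..R}) = enat r"
  by (rule fo_local[of R]) auto

lemma stepJ_into:
  assumes p1: "\<And>i. i \<ge> 1 \<Longrightarrow> \<pi> i \<ge> 1" and x: "x \<in> PiE {0..R} (S \<pi>)"
  shows "stepJ \<pi> R x \<in> PiE {0..R} (S \<pi>)"
proof -
  have "clock_step \<pi> x i \<in> S \<pi> i" if i: "i \<in> {0..R}" for i
  proof (cases "i = 0")
    case True then show ?thesis using x i by (simp add: cs_0 PiE_def Pi_def)
  next
    case False
    then have i1: "i \<ge> 1" by simp
    have xi: "x i \<in> {1..\<pi> i}" using x i False by (auto simp: PiE_def Pi_def S_def)
    show ?thesis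
    proof (cases "first_one x" i rule: token_cases)
      case 1 then show ?thesis using xi False by (simp add: cs_gt S_def)
    next
      case 2 then show ?thesis using p1 i1 False by (simp add: cs_eq S_def)
    next
      case 3
      have "x i \<noteq> 1" using 3 fo_less i1 by blast
      then have "x i > 1" "x i - 1 \<ge> 1" "x i - 1 \<le> \<pi> i" using xi by auto
      then show ?thesis using 3 False i1 by (simp add: cs_lt S_def)
    qed
  qed
  then show ?thesis unfolding stepJ_def by auto
qed

lemma stepJ_fo_lt:
  assumes x: "x \<in> PiE {0..R} (S \<pi>)" and i: "1 \<le> i" "i \<le> R" and lt: "enat i < first_one x"
  shows "stepJ \<pi> R x i < \<pi> i"
proof -
  have xi: "x i \<in> {1..\<pi> i}" using x i by (auto simp: PiE_def Pi_def S_def)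
  have "x i \<noteq> 1" using lt fo_less i by blast
  then have "x i - 1 < \<pi> i" "x i > 1" using xi by auto
  then show ?thesis using i lt by (simp add: stepJ_def cs_lt)
qed

lemma stepJ_fo_eq:
  assumes i: "i \<le> R" and e: "first_one x = enat i"
  shows "stepJ \<pi> R x i = \<pi> i"
  using assms by (simp add: stepJ_def cs_eq)

lemma fo_finite_le: "first_one x \<le> enat i \<Longrightarrow> \<exists>j. j \<le> i \<and> first_one x = enat j"
  by (cases "first_one x") auto

lemma stepJ_H:
  assumes x: "x \<in> PiE {0..R} (S \<pi>)" and y: "y \<in> PiE {0..R} (S \<pi>)"
    and eq: "stepJ \<pi> R x = stepJ \<pi> R y" and i: "i \<le> R" and e: "first_one x = enat i"
  shows "first_one y = enat i"
proof -
  have i1: "i \<ge> 1" using e fo_enat by blast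
  show ?thesis
  proof (cases "first_one y" i rule: token_cases)
    case 1
    then obtain j where j: "j \<le> i" "first_one y = enat j" using fo_finite_le[of y i] by (auto simp: less_imp_le)
    then have "j < i" using 1 by auto
    have j1: "j \<ge> 1" using j fo_enat by blast
    have "stepJ \<pi> R x j < \<pi> j" using stepJ_fo_lt[OF x j1] \<open>j < i\<close> i e by simp
    moreover have "stepJ \<pi> R y j = \<pi> j" using stepJ_fo_eq[of j R y] j i by simp
    ultimately show ?thesis using eq by simp
  next
    case 2 then show ?thesis .
  next
    case 3
    have "stepJ \<pi> R y i < \<pi> i" using stepJ_fo_lt[OF y i1 i 3] .
    moreover have "stepJ \<pi> R x i = \<pi> i" using stepJ_fo_eq[OF i e] .
    ultimately show ?thesis using eq by simp
  qed
qed

lemma stepJ_inj: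
  assumes p1: "\<And>i. i \<ge> 1 \<Longrightarrow> \<pi> i \<ge> 1"
  shows "inj_on (stepJ \<pi> R) (PiE {0..R} (S \<pi>))"
proof (rule inj_onI)
  fix x y assume x: "x \<in> PiE {0..R} (S \<pi>)" and y: "y \<in> PiE {0..R} (S \<pi>)" and eq: "stepJ \<pi> R x = stepJ \<pi> R y"
  have H: "first_one x = enat j \<longleftrightarrow> first_one y = enat j" if "j \<le> R" for j
    using stepJ_H[OF x y eq that] stepJ_H[OF y x eq[symmetric] that] by blast
  have "x i = y i" if i: "i \<in> {0..R}" for i
  proof (cases "i = 0")
    case True
    have "x 0 \<in> S \<pi> 0" "y 0 \<in> S \<pi> 0" using PiE_mem[OF x, of 0] PiE_mem[OF y, of 0] by simp_all
    then show ?thesis using True by (simp add: S_def)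
  next
    case False
    then have i1: "i \<ge> 1" and iR: "i \<le> R" using i by auto
    have xi: "x i \<in> {1..\<pi> i}" "y i \<in> {1..\<pi> i}" using x y i False by (auto simp: PiE_def Pi_def S_def)
    have si: "clock_step \<pi> x i = clock_step \<pi> y i" using fun_cong[OF eq, of i] i by (simp add: stepJ_def)
    show ?thesis
    proof (cases "first_one x" i rule: token_cases)
      case 1
      then obtain j where j: "j \<le> i" "first_one x = enat j" using fo_finite_le[of x i] by (auto simp: less_imp_le)
      then have "first_one y = enat j" using H[of j] iR by simp
      then have "first_one y < enat i" using 1 j by simp
      then show ?thesis using 1 si by (simp add: cs_gt)
    next
      case 2
      then have "first_one y = enat i" using H iR by blast
      then show ?thesis using 2 fo_enat by metis
    next
      case 3
      have "enat i < first_one y"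
      proof (rule ccontr)
        assume "\<not> ?thesis"
        then obtain j where j: "j \<le> i" "first_one y = enat j" using fo_finite_le[of y i] by (auto simp: not_less less_imp_le)
        then have "first_one x = enat j" using H[of j] iR by simp
        then show False using 3 j by simp
      qed
      moreover have "x i \<noteq> 1" using 3 fo_less i1 by blast
      moreover have "y i \<noteq> 1" using \<open>enat i < first_one y\<close> fo_less i1 by blast
      ultimately show ?thesis using 3 si xi i1 by (simp add: cs_lt)
    qed
  qed
  then have xy: "\<And>i. i \<in> {0..R} \<Longrightarrow> x i = y i" by blast
  show "x = y" using x y by (intro extensionalityI[of x "{0..R}" y] xy) (auto simp: PiE_def)
qed

lemma stepJ_bij:
  assumes p1: "\<And>i. i \<ge> 1 \<Longrightarrow> \<pi> i \<ge> 1"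
  shows "bij_betw (stepJ \<pi> R) (PiE {0..R} (S \<pi>)) (PiE {0..R} (S \<pi>))"
proof -
  have inj: "inj_on (stepJ \<pi> R) (PiE {0..R} (S \<pi>))" by (rule stepJ_inj[of \<pi>, OF p1])
  have into: "stepJ \<pi> R ` (PiE {0..R} (S \<pi>)) \<subseteq> PiE {0..R} (S \<pi>)"
    using stepJ_into[of \<pi>, OF p1] by blast
  have fin: "finite (PiE {0..R} (S \<pi>))" by (simp add: finite_PiE S_fin)
  show ?thesis unfolding bij_betw_def using endo_inj_surj[OF fin into inj] inj by simp
qed

lemma card_bij_pred:
  assumes "bij_betw g A A"
  shows "card {x \<in> A. Q (g x)} = card {x \<in> A. Q x}"
proof -
  have "bij_betw g {x \<in> A. Q (g x)} {x \<in> A. Q x}"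
    using assms by (rule bij_betw_subset) (use assms in \<open>auto simp: bij_betw_def\<close>)
  then show ?thesis by (rule bij_betw_same_card)
qed

lemma stat:
  assumes p1: "\<And>i. i \<ge> 1 \<Longrightarrow> \<pi> i \<ge> 1"
  shows "measure (seed_measure \<pi>) {\<sigma>. Q (restrict (clocks \<pi> \<sigma> n) {0..R})}
       = measure (seed_measure \<pi>) {\<sigma>. Q (restrict \<sigma> {0..R})}"
proof -
  have "{\<sigma>. Q (restrict (clocks \<pi> \<sigma> n) {0..R})} = {\<sigma>. (\<lambda>x. Q ((stepJ \<pi> R ^^ n) x)) (restrict \<sigma> {0..R})}"
    by (simp add: restrict_clocks)
  moreover have b: "bij_betw (stepJ \<pi> R ^^ n) (PiE {0..R} (S \<pi>)) (PiE {0..R} (S \<pi>))"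
    by (rule bij_betw_funpow[OF stepJ_bij[of \<pi>, OF p1]])
  ultimately show ?thesis
    using prob_fin[of "{0..R}" \<pi> "\<lambda>x. Q ((stepJ \<pi> R ^^ n) x)", OF _ p1]
      prob_fin[of "{0..R}" \<pi> Q, OF _ p1] card_bij_pred[OF b, of Q]
    by simp
qed

lemma sets_clocks: "{\<sigma>. Q (restrict (clocks \<pi> \<sigma> n) {0..R})} \<in> sets (seed_measure \<pi>)"
proof -
  have "{\<sigma>. Q (restrict (clocks \<pi> \<sigma> n) {0..R})} = {\<sigma>. (\<lambda>x. Q ((stepJ \<pi> R ^^ n) x)) (restrict \<sigma> {0..R})}"
    by (simp add: restrict_clocks)
  then show ?thesis using sets_fin[of "{0..R}"] by simp
qed

lemma sets_tok: "{\<sigma>. mp_seq \<pi> \<sigma> t = enat r} \<in> sets (seed_measure \<pi>)"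
proof -
  have "{\<sigma>. mp_seq \<pi> \<sigma> t = enat r} = {\<sigma>. (\<lambda>x. first_one x = enat r) (restrict (clocks \<pi> \<sigma> (t - 1)) {0..r})}"
    unfolding mp_seq_def using fo_restrict[of r r] by simp
  then show ?thesis using sets_clocks by simp
qed

lemma mp_meas: "(\<lambda>\<sigma>. mp_seq \<pi> \<sigma> t) \<in> measurable (seed_measure \<pi>) (count_space UNIV)"
  unfolding measurable_count_space_eq2_countable
proof (intro conjI ballI)
  fix a :: enat
  show "(\<lambda>\<sigma>. mp_seq \<pi> \<sigma> t) -` {a} \<inter> space (seed_measure \<pi>) \<in> sets (seed_measure \<pi>)"
  proof (cases a)
    case (enat r)
    then show ?thesis using sets_tok[of \<pi> t r] by (simp add: sp vimage_def)
  next
    case infinity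
    have "(\<lambda>\<sigma>. mp_seq \<pi> \<sigma> t) -` {a} \<inter> space (seed_measure \<pi>) = space (seed_measure \<pi>) - (\<Union>r. {\<sigma>. mp_seq \<pi> \<sigma> t = enat r})"
      using infinity by (auto simp: sp)
    then show ?thesis using sets_tok by auto
  qed
qed auto



lemma map_meas:
  fixes f :: "nat \<Rightarrow> 'a \<Rightarrow> 'b::countable"
  assumes "\<And>t. (\<lambda>\<sigma>. f t \<sigma>) \<in> measurable M (count_space UNIV)"
  shows "(\<lambda>\<sigma>. map (\<lambda>t. f t \<sigma>) xs) \<in> measurable M (count_space UNIV)"
proof (induction xs)
  case Nil then show ?case by simp
next
  case (Cons a xs)
  have "(\<lambda>\<sigma>. (\<lambda>i. i # map (\<lambda>t. f t \<sigma>) xs) (f a \<sigma>)) \<in> measurable M (count_space UNIV)"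
  proof (rule measurable_compose_countable[OF _ assms])
    fix i
    show "(\<lambda>\<sigma>. i # map (\<lambda>t. f t \<sigma>) xs) \<in> measurable M (count_space UNIV)"
      using measurable_compose[OF Cons.IH, of "\<lambda>l. i # l" "count_space UNIV"] by simp
  qed
  then show ?case by simp
qed

theorem theorem6:
  fixes \<pi> :: "nat \<Rightarrow> nat" and T :: nat
  assumes periods: "\<And>r. r \<ge> 1 \<Longrightarrow> \<pi> r \<ge> 2"
    and T: "T \<ge> 1"
  defines "A \<equiv> {r::nat. r \<ge> 1 \<and> wbar \<pi> r \<le> real T}"
    and "B \<equiv> {r::nat. r \<ge> 1 \<and> measure (seed_measure \<pi>) {\<sigma> \<in> space (seed_measure \<pi>). mp_seq \<pi> \<sigma> 1 = enat r} \<ge> 1 / real T}"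
    and "N \<equiv> (\<lambda>\<sigma>. {r::nat. r \<ge> 1 \<and> (\<exists>t\<in>{1..T}. mp_seq \<pi> \<sigma> t = enat r)})"
  shows "real (card A) \<le> (\<integral>\<sigma>. real (card (N \<sigma>)) \<partial>seed_measure \<pi>)
       \<and> (\<integral>\<sigma>. real (card (N \<sigma>)) \<partial>seed_measure \<pi>)
           \<le> real (card B) + real T * measure (seed_measure \<pi>) {\<sigma> \<in> space (seed_measure \<pi>). \<not> (\<exists>r\<in>B. mp_seq \<pi> \<sigma> 1 = enat r)}"
proof -
  have p1: "\<And>i. i \<ge> 1 \<Longrightarrow> \<pi> i \<ge> 1" using periods by (metis le_trans one_le_numeral)
  let ?P = "seed_measure \<pi>"
  interpret P: prob_space ?P unfolding seed_eq by (rule prob_space_PiM) (simp add: Mx_def prob_space_measure_pmf)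
  note spP = sp[of \<pi>]
  define F where "F \<sigma> = map (\<lambda>t. mp_seq \<pi> \<sigma> t) [1..<T+1]" for \<sigma>
  have Fm: "F \<in> measurable ?P (count_space UNIV)"
    unfolding F_def by (rule map_meas[OF mp_meas])
  have Neq: "N \<sigma> = {r. r \<ge> 1 \<and> enat r \<in> set (F \<sigma>)}" for \<sigma>
  proof -
    have "set (F \<sigma>) = (\<lambda>t. mp_seq \<pi> \<sigma> t) ` {1..T}"
    proof -
      have "{1..<T+1} = {1..T}" by auto
      then show ?thesis unfolding F_def by (simp only: set_map set_upt)
    qed
    then show ?thesis unfolding N_def by (auto simp: image_iff) (metis atLeastAtMost_iff)
  qed
  have cNm: "(\<lambda>\<sigma>. real (card (N \<sigma>))) \<in> borel_measurable ?P"
  proof -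
    have "(\<lambda>\<sigma>. (\<lambda>xs. real (card {r. r \<ge> 1 \<and> enat r \<in> set xs})) (F \<sigma>)) \<in> borel_measurable ?P"
      by (rule measurable_compose[OF Fm]) (rule measurable_count_space_eq1[THEN iffD2], simp)
    then show ?thesis unfolding Neq .
  qed
  have Nsub: "N \<sigma> \<subseteq> (\<lambda>t. the_enat (mp_seq \<pi> \<sigma> t)) ` {1..T}" for \<sigma>
  proof
    fix r assume "r \<in> N \<sigma>"
    then obtain t where t: "t \<in> {1..T}" "mp_seq \<pi> \<sigma> t = enat r" unfolding N_def by blast
    show "r \<in> (\<lambda>t. the_enat (mp_seq \<pi> \<sigma> t)) ` {1..T}" by (rule rev_image_eqI[OF t(1)]) (simp add: t(2))
  qed
  have Nfin: "finite (N \<sigma>)" for \<sigma> using Nsub by (rule finite_subset) simp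
  have Nle: "card (N \<sigma>) \<le> T" for \<sigma>
    using card_mono[OF _ Nsub[of \<sigma>]] card_image_le[of "{1..T}" "\<lambda>t. the_enat (mp_seq \<pi> \<sigma> t)"] by simp
  have intN: "integrable ?P (\<lambda>\<sigma>. real (card (N \<sigma>)))"
    by (rule P.integrable_const_bound[where B = T]) (use Nle cNm in auto)
  have AEi: "AE \<sigma> in ?P. (i \<ge> 1 \<longrightarrow> \<sigma> i \<in> {1..\<pi> i})" for i
  proof -
    define Ni where "Ni = {\<sigma>. (\<lambda>x. \<not> (i \<ge> 1 \<longrightarrow> x i \<in> {1..\<pi> i})) (restrict \<sigma> {0..i})}"
    have Ns: "Ni \<in> sets ?P" unfolding Ni_def by (rule sets_fin) simp
    have emp: "{x \<in> PiE {0..i} (S \<pi>). \<not> (i \<ge> 1 \<longrightarrow> x i \<in> {1..\<pi> i})} = {}"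
      using PiE_mem[of _ "{0..i}" "S \<pi>" i] by (fastforce simp: S_def)
    have "measure ?P Ni = real (card {x \<in> PiE {0..i} (S \<pi>). \<not> (i \<ge> 1 \<longrightarrow> x i \<in> {1..\<pi> i})}) / real (card (PiE {0..i} (S \<pi>)))"
      unfolding Ni_def by (rule prob_fin[of "{0..i}" \<pi> "\<lambda>x. \<not> (i \<ge> 1 \<longrightarrow> x i \<in> {1..\<pi> i})", OF _ p1]) simp
    then have "measure ?P Ni = 0" unfolding emp by simp
    then have "emeasure ?P Ni = 0" by (simp add: P.emeasure_eq_measure)
    moreover have "{\<sigma> \<in> space ?P. \<not> (i \<ge> 1 \<longrightarrow> \<sigma> i \<in> {1..\<pi> i})} = Ni"
      unfolding Ni_def spP by auto
    ultimately show ?thesis using AE_iff_measurable[OF Ns, of "\<lambda>\<sigma>. i \<ge> 1 \<longrightarrow> \<sigma> i \<in> {1..\<pi> i}"] by simp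
  qed
  have AERg: "AE \<sigma> in ?P. Rg \<pi> \<sigma>"
    unfolding Rg_def AE_all_countable using AEi by blast
  have AEA: "AE \<sigma> in ?P. real (card A) \<le> real (card (N \<sigma>))"
    using AERg
  proof (rule AE_mp, intro AE_I2 impI)
    fix \<sigma> assume Rg: "Rg \<pi> \<sigma>"
    have "A \<subseteq> N \<sigma>" unfolding A_def N_def using det[of \<pi> \<sigma>, OF Rg periods] by auto
    then show "real (card A) \<le> real (card (N \<sigma>))" using card_mono[OF Nfin] by simp
  qed
  have lower: "real (card A) \<le> (\<integral>\<sigma>. real (card (N \<sigma>)) \<partial>?P)"
  proof -
    have "(\<integral>\<sigma>. real (card A) \<partial>?P) \<le> (\<integral>\<sigma>. real (card (N \<sigma>)) \<partial>?P)"
      by (rule integral_mono_AE[OF _ intN AEA]) simp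
    then show ?thesis by (simp add: P.prob_space)
  qed
  have Fs: "{\<sigma>. mp_seq \<pi> \<sigma> 1 = enat r} \<in> sets ?P" for r by (rule sets_tok)
  have Bfin: "finite B"
  proof (rule ccontr)
    assume "infinite B"
    then obtain B' where B': "finite B'" "card B' = Suc T" "B' \<subseteq> B" using infinite_arbitrarily_large by blast
    have "measure ?P (\<Union>r\<in>B'. {\<sigma>. mp_seq \<pi> \<sigma> 1 = enat r}) = (\<Sum>r\<in>B'. measure ?P {\<sigma>. mp_seq \<pi> \<sigma> 1 = enat r})"
      using B'(1) Fs by (intro P.finite_measure_finite_Union) (auto simp: disjoint_family_on_def)
    moreover have "measure ?P (\<Union>r\<in>B'. {\<sigma>. mp_seq \<pi> \<sigma> 1 = enat r}) \<le> 1" by (rule P.prob_le_1)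
    moreover have "(\<Sum>r\<in>B'. measure ?P {\<sigma>. mp_seq \<pi> \<sigma> 1 = enat r}) \<ge> (\<Sum>r\<in>B'. 1 / real T)"
      using B'(3) unfolding B_def spP by (intro sum_mono) auto
    moreover have "(\<Sum>r\<in>B'. 1 / real T) = real (Suc T) / real T" using B'(2) by simp
    moreover have "real (Suc T) / real T > 1" using T by simp
    ultimately show False by linarith
  qed
  obtain R where R: "\<forall>r\<in>B. r \<le> R" using Bfin finite_nat_set_iff_bounded_le by blast
  define Q where "Q x = (\<not> (\<exists>r\<in>B. first_one x = enat r))" for x
  define E where "E t = {\<sigma>. \<not> (\<exists>r\<in>B. mp_seq \<pi> \<sigma> t = enat r)}" for t
  have Eeq: "E t = {\<sigma>. Q (restrict (clocks \<pi> \<sigma> (t - 1)) {0..R})}" for t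
    unfolding E_def Q_def mp_seq_def using fo_restrict R by blast
  have Es: "E t \<in> sets ?P" for t unfolding Eeq by (rule sets_clocks)
  have Ep: "measure ?P (E t) = measure ?P (E 1)" for t
    unfolding Eeq using stat[of \<pi> Q "t - 1" R, OF p1] stat[of \<pi> Q 0 R, OF p1] by simp
  have pw: "real (card (N \<sigma>)) \<le> real (card B) + (\<Sum>t\<in>{1..T}. indicator (E t) \<sigma>)" for \<sigma>
  proof -
    have "N \<sigma> - B \<subseteq> (\<lambda>t. the_enat (mp_seq \<pi> \<sigma> t)) ` {t\<in>{1..T}. \<sigma> \<in> E t}"
    proof
      fix r assume r: "r \<in> N \<sigma> - B"
      then obtain t where t: "t \<in> {1..T}" "mp_seq \<pi> \<sigma> t = enat r" unfolding N_def by blast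
      have "\<sigma> \<in> E t" unfolding E_def using t(2) r by auto
      then have t': "t \<in> {t\<in>{1..T}. \<sigma> \<in> E t}" using t(1) by blast
      show "r \<in> (\<lambda>t. the_enat (mp_seq \<pi> \<sigma> t)) ` {t\<in>{1..T}. \<sigma> \<in> E t}"
        by (rule rev_image_eqI[OF t']) (simp add: t(2))
    qed
    then have c1: "card (N \<sigma> - B) \<le> card {t\<in>{1..T}. \<sigma> \<in> E t}"
    proof -
      assume sub: "N \<sigma> - B \<subseteq> (\<lambda>t. the_enat (mp_seq \<pi> \<sigma> t)) ` {t\<in>{1..T}. \<sigma> \<in> E t}"
      have fin: "finite {t\<in>{1..T}. \<sigma> \<in> E t}" by simp
      have "card (N \<sigma> - B) \<le> card ((\<lambda>t. the_enat (mp_seq \<pi> \<sigma> t)) ` {t\<in>{1..T}. \<sigma> \<in> E t})"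
        by (rule card_mono[OF finite_imageI[OF fin] sub])
      also have "\<dots> \<le> card {t\<in>{1..T}. \<sigma> \<in> E t}" by (rule card_image_le[OF fin])
      finally show ?thesis .
    qed
    have "card (N \<sigma>) \<le> card (N \<sigma> \<inter> B) + card (N \<sigma> - B)"
      by (metis Int_Diff_Un card_Un_le)
    moreover have "card (N \<sigma> \<inter> B) \<le> card B" using Bfin by (simp add: card_mono)
    ultimately have "card (N \<sigma>) \<le> card B + card {t\<in>{1..T}. \<sigma> \<in> E t}" using c1 by linarith
    moreover have "real (card {t\<in>{1..T}. \<sigma> \<in> E t}) = (\<Sum>t\<in>{1..T}. indicator (E t) \<sigma>)"
    proof -
      have e: "{t\<in>{1..T}. \<sigma> \<in> E t} = {1..T} \<inter> {t. \<sigma> \<in> E t}" by auto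
      show ?thesis unfolding e by (simp add: indicator_def sum.If_cases)
    qed
    ultimately show ?thesis
    proof -
      assume a1: "card (N \<sigma>) \<le> card B + card {t\<in>{1..T}. \<sigma> \<in> E t}"
        and a2: "real (card {t\<in>{1..T}. \<sigma> \<in> E t}) = (\<Sum>t\<in>{1..T}. indicator (E t) \<sigma>)"
      have "real (card (N \<sigma>)) \<le> real (card B + card {t\<in>{1..T}. \<sigma> \<in> E t})"
        using a1 by (simp only: of_nat_le_iff)
      then show ?thesis using a2 by simp
    qed
  qed
  have intE: "integrable ?P (indicator (E t) :: _ \<Rightarrow> real)" for t
    using Es[of t] by (intro integrable_real_indicator) (simp_all add: P.emeasure_eq_measure)
  have intS: "integrable ?P (\<lambda>\<sigma>. (\<Sum>t\<in>{1..T}. indicator (E t) \<sigma>) :: real)"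
    using Bochner_Integration.integrable_sum[where I="{1..T}" and M="?P" and f="\<lambda>t \<sigma>. indicator (E t) \<sigma> :: real"] intE by simp
  have intR: "integrable ?P (\<lambda>\<sigma>. real (card B) + (\<Sum>t\<in>{1..T}. indicator (E t) \<sigma>))"
    by (rule Bochner_Integration.integrable_add[OF P.integrable_const intS])
  have "(\<integral>\<sigma>. real (card (N \<sigma>)) \<partial>?P) \<le> (\<integral>\<sigma>. real (card B) + (\<Sum>t\<in>{1..T}. indicator (E t) \<sigma>) \<partial>?P)"
    by (rule integral_mono[OF intN intR pw])
  also have "\<dots> = (\<integral>\<sigma>. real (card B) \<partial>?P) + (\<integral>\<sigma>. (\<Sum>t\<in>{1..T}. indicator (E t) \<sigma>) \<partial>?P)"
    by (rule Bochner_Integration.integral_add[OF P.integrable_const intS])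
  also have "(\<integral>\<sigma>. (\<Sum>t\<in>{1..T}. indicator (E t) \<sigma> :: real) \<partial>?P) = (\<Sum>t\<in>{1..T}. (\<integral>\<sigma>. (indicator (E t) \<sigma> :: real) \<partial>?P))"
    by (rule Bochner_Integration.integral_sum[where I="{1..T}" and M="?P" and f="\<lambda>t \<sigma>. indicator (E t) \<sigma> :: real"]) (rule intE)
  also have "(\<Sum>t\<in>{1..T}. (\<integral>\<sigma>. (indicator (E t) \<sigma> :: real) \<partial>?P)) = (\<Sum>t\<in>{1..T}. measure ?P (E 1))"
  proof (rule sum.cong[OF refl])
    fix t
    have "(\<integral>\<sigma>. (indicator (E t) \<sigma> :: real) \<partial>?P) = measure ?P (E t \<inter> space ?P)" by (rule Bochner_Integration.integral_indicator)
    then show "(\<integral>\<sigma>. (indicator (E t) \<sigma> :: real) \<partial>?P) = measure ?P (E 1)" using Ep[of t] by (simp add: spP)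
  qed
  also have "(\<integral>\<sigma>. real (card B) \<partial>?P) = real (card B)" by (simp add: P.prob_space)
  finally have "(\<integral>\<sigma>. real (card (N \<sigma>)) \<partial>?P) \<le> real (card B) + (\<Sum>t\<in>{1..T}. measure ?P (E 1))" .
  also have "(\<Sum>t\<in>{1..T}. measure ?P (E 1)) = real T * measure ?P (E 1)" by simp
  finally have upper: "(\<integral>\<sigma>. real (card (N \<sigma>)) \<partial>?P) \<le> real (card B) + real T * measure ?P (E 1)" .
  have "E 1 = {\<sigma> \<in> space ?P. \<not> (\<exists>r\<in>B. mp_seq \<pi> \<sigma> 1 = enat r)}" unfolding E_def spP by simp
  then show ?thesis using lower upper by simp
qed

end
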